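(* In the two-door cascading memoryless setting, every semi-fractional sequence $\pi$ has an integer sequence $\pi'$ such that $\mathbb{E}[\pi']\le\mathbb{E}[\pi]+1$.
   Context: Two cascading memoryless doors with durations: parameters $p_1,p_2\in(0,1)$, $q_1=1-p_1$, $q_2=1-p_2$, and $c>0$. Both doors start closed. A semi-fractional sequence is an infinite alternating sequence $1^{t_1}\,2\,1^{t_2}\,2\,1^{t_3}\,2\cdots$ with real $t_j\ge0$; equivalently it is given by a non-decreasing sequence of reals $0=\pi_0\le\pi_1\le\pi_2\le\cdots$ with $t_j=\pi_j-\pi_{j-1}$. A 1-knock $1^t$ takes $t$ time units and, if door 1 is closed, opens it with probability $1-q_1^t$, independently of everything else. A 2-knock takes $c$ time units and opens door 2 with probability $p_2$ (independently) if door 1 is open at that time, and with probability $0$ otherwise. There is no feedback. The running time is the time at which both doors are open (i.e. the end of the 2-knock that opens door 2; the $i$-th 2-knock ends at time $\pi_i+ci$), and $\mathbb{E}[\pi]$ denotes its expectation. An integer sequence is a semi-fractional sequence with all $\pi_i\in\mathbb{N}$ (equivalently, an ordinary sequence of unit-length knocks on door 1 and knocks on door 2). *)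

theory Defs
  imports "HOL-Analysis.Analysis"
begin

text \<open>A semi-fractional sequence is given by the non-decreasing real sequence
  0 = pi 0 \<le> pi 1 \<le> pi 2 \<le> ...; pi i is the total 1-knock time before the i-th 2-knock,
  and the i-th 2-knock ends at time pi i + c * i.\<close>

definition semi_fractional :: "(nat \<Rightarrow> real) \<Rightarrow> bool" where
  "semi_fractional \<pi> \<longleftrightarrow> \<pi> 0 = 0 \<and> mono \<pi>"

definition integer_sequence :: "(nat \<Rightarrow> real) \<Rightarrow> bool" where
  "integer_sequence \<pi> \<longleftrightarrow> semi_fractional \<pi> \<and> (\<forall>i. \<pi> i \<in> \<nat>)"

text \<open>Probability that door 1 is open for the first time at the j-th 2-knock (j \<ge> 1):
  door 1 is still closed after total 1-knock time s with probability q1 powr s.\<close>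
definition door1_first :: "real \<Rightarrow> (nat \<Rightarrow> real) \<Rightarrow> nat \<Rightarrow> real" where
  "door1_first p1 \<pi> j = (1 - p1) powr \<pi> (j - 1) - (1 - p1) powr \<pi> j"

text \<open>Probability that door 2 is opened by the k-th 2-knock (k \<ge> 1): door 1 was first
  open at the j-th 2-knock, the 2-knocks j..k-1 failed and the k-th succeeds.\<close>
definition finish_prob :: "real \<Rightarrow> real \<Rightarrow> (nat \<Rightarrow> real) \<Rightarrow> nat \<Rightarrow> real" where
  "finish_prob p1 p2 \<pi> k = (\<Sum>j\<in>{1..k}. door1_first p1 \<pi> j * (1 - p2) ^ (k - j) * p2)"

text \<open>Expected running time (in [0, \<infinity>]): the running time equals pi k + c * k when
  door 2 opens at the k-th 2-knock, and is infinite if both doors never open.\<close>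
definition expected_time :: "real \<Rightarrow> real \<Rightarrow> real \<Rightarrow> (nat \<Rightarrow> real) \<Rightarrow> ennreal" where
  "expected_time p1 p2 c \<pi> =
     (\<Sum>k. ennreal (finish_prob p1 p2 \<pi> (Suc k) * (\<pi> (Suc k) + c * real (Suc k))))
     + top * (1 - (\<Sum>k. ennreal (finish_prob p1 p2 \<pi> (Suc k))))"

end

theory Submission
  imports Defs
begin

definition FF :: "real \<Rightarrow> real \<Rightarrow> (nat \<Rightarrow> real) \<Rightarrow> nat \<Rightarrow> real" where
  "FF p1 p2 \<pi> N = (\<Sum>k<N. finish_prob p1 p2 \<pi> (Suc k))"

definition DD :: "real \<Rightarrow> (nat \<Rightarrow> real) \<Rightarrow> nat \<Rightarrow> real" where
  "DD p1 \<pi> j = 1 - (1 - p1) powr \<pi> j"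

lemma fp_one: "finish_prob p1 p2 \<pi> (Suc 0) = door1_first p1 \<pi> 1 * p2"
  by (simp add: finish_prob_def)

lemma fp_rec:
  "finish_prob p1 p2 \<pi> (Suc (Suc k)) =
     (1 - p2) * finish_prob p1 p2 \<pi> (Suc k) + door1_first p1 \<pi> (Suc (Suc k)) * p2"
proof -
  have "finish_prob p1 p2 \<pi> (Suc (Suc k)) =
     (\<Sum>j\<in>{1..Suc k}. door1_first p1 \<pi> j * (1 - p2) ^ (Suc (Suc k) - j) * p2)
     + door1_first p1 \<pi> (Suc (Suc k)) * p2"
    unfolding finish_prob_def by (simp add: sum.cl_ivl_Suc)
  also have "(\<Sum>j\<in>{1..Suc k}. door1_first p1 \<pi> j * (1 - p2) ^ (Suc (Suc k) - j) * p2)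
     = (1 - p2) * (\<Sum>j\<in>{1..Suc k}. door1_first p1 \<pi> j * (1 - p2) ^ (Suc k - j) * p2)"
    unfolding sum_distrib_left
    by (rule sum.cong) (auto simp: Suc_diff_le)
  finally show ?thesis unfolding finish_prob_def by simp
qed

lemma FF_rec:
  assumes "\<pi> 0 = 0" "p1 < 1"
  shows "FF p1 p2 \<pi> (Suc N) = (1 - p2) * FF p1 p2 \<pi> N + p2 * DD p1 \<pi> (Suc N)"
proof (induction N)
  case 0
  then show ?case using assms
    by (simp add: FF_def fp_one door1_first_def DD_def)
next
  case (Suc N)
  have "FF p1 p2 \<pi> (Suc (Suc N)) = FF p1 p2 \<pi> (Suc N) + finish_prob p1 p2 \<pi> (Suc (Suc N))"
    by (simp add: FF_def)
  also have "\<dots> = (1 - p2) * (FF p1 p2 \<pi> N + finish_prob p1 p2 \<pi> (Suc N))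
       + p2 * DD p1 \<pi> (Suc (Suc N))"
    unfolding Suc fp_rec by (simp add: DD_def door1_first_def algebra_simps)
  also have "FF p1 p2 \<pi> N + finish_prob p1 p2 \<pi> (Suc N) = FF p1 p2 \<pi> (Suc N)"
    by (simp add: FF_def)
  finally show ?case .
qed

lemma FF_mono:
  assumes "\<pi> 0 = 0" "\<pi>' 0 = 0" "p1 < 1" "p2 < 1" "0 < p2"
    and "\<And>j. DD p1 \<pi> j \<le> DD p1 \<pi>' j"
  shows "FF p1 p2 \<pi> N \<le> FF p1 p2 \<pi>' N"
proof (induction N)
  case 0
  then show ?case by (simp add: FF_def)
next
  case (Suc N)
  have "(1 - p2) * FF p1 p2 \<pi> N \<le> (1 - p2) * FF p1 p2 \<pi>' N"
    using Suc assms by (intro mult_left_mono) auto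
  moreover have "p2 * DD p1 \<pi> (Suc N) \<le> p2 * DD p1 \<pi>' (Suc N)"
    using assms by (intro mult_left_mono) auto
  ultimately show ?case using FF_rec[where \<pi>=\<pi> and ?p2.0=p2, OF assms(1,3)] FF_rec[where \<pi>=\<pi>' and ?p2.0=p2, OF assms(2,3)] by simp
qed

lemma FF_le1:
  assumes "\<pi> 0 = 0" "0 < p1" "p1 < 1" "p2 < 1" "0 < p2"
  shows "FF p1 p2 \<pi> N \<le> 1"
proof (induction N)
  case 0
  then show ?case by (simp add: FF_def)
next
  case (Suc N)
  have "DD p1 \<pi> (Suc N) \<le> 1" by (simp add: DD_def)
  then have "p2 * DD p1 \<pi> (Suc N) \<le> p2" using assms by (simp add: mult_left_le)
  moreover have "(1 - p2) * FF p1 p2 \<pi> N \<le> 1 - p2"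
    using Suc assms by (simp add: mult_left_le)
  ultimately show ?case using FF_rec[where \<pi>=\<pi> and ?p2.0=p2, OF assms(1,3)] by simp
qed

lemma fp_nonneg:
  assumes "mono \<pi>" "0 < p1" "p1 < 1" "0 < p2" "p2 < 1"
  shows "0 \<le> finish_prob p1 p2 \<pi> k"
  unfolding finish_prob_def
proof (intro sum_nonneg mult_nonneg_nonneg)
  fix j assume "j \<in> {1..k}"
  have "\<pi> (j - 1) \<le> \<pi> j" using assms(1) by (simp add: monoD)
  then show "0 \<le> door1_first p1 \<pi> j"
    unfolding door1_first_def using assms by (simp add: powr_mono')
qed (use assms in auto)


lemma abel_step:
  fixes u u' a :: "nat \<Rightarrow> real"
  assumes "mono a" "\<And>N. (\<Sum>k<N. u k) \<le> (\<Sum>k<N. u' k)"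
  shows "(\<Sum>k<N. u' k * a (Suc k)) \<le> (\<Sum>k<N. u k * a (Suc k)) + a N * ((\<Sum>k<N. u' k) - (\<Sum>k<N. u k))"
proof (induction N)
  case 0
  then show ?case by simp
next
  case (Suc N)
  have "a N * ((\<Sum>k<N. u' k) - (\<Sum>k<N. u k)) \<le> a (Suc N) * ((\<Sum>k<N. u' k) - (\<Sum>k<N. u k))"
    using assms by (intro mult_right_mono) (auto simp: monoD)
  then show ?case using Suc by (simp add: algebra_simps)
qed

theorem mainTheorem10:
  fixes p1 p2 c :: real and \<pi> :: "nat \<Rightarrow> real"
  assumes "0 < p1" "p1 < 1" "0 < p2" "p2 < 1" "0 < c"
    and "semi_fractional \<pi>"
  shows "\<exists>\<pi>'. integer_sequence \<pi>' \<and> expected_time p1 p2 c \<pi>' \<le> expected_time p1 p2 c \<pi> + 1"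
proof -
  have p0: "\<pi> 0 = 0" and pm: "mono \<pi>" using assms(6) by (auto simp: semi_fractional_def)
  have pnn: "0 \<le> \<pi> k" for k using p0 pm by (metis monoD zero_le)
  define \<pi>' where "\<pi>' k = real (nat \<lceil>\<pi> k\<rceil>)" for k
  have p'ge: "\<pi> k \<le> \<pi>' k" for k
    using pnn[of k] unfolding \<pi>'_def by (simp add: le_of_int_ceiling)
  have p'le: "\<pi>' k \<le> \<pi> k + 1" for k
    using pnn[of k] unfolding \<pi>'_def by (simp add: of_int_ceiling_le_add_one)
  have p'0: "\<pi>' 0 = 0" using p0 by (simp add: \<pi>'_def)
  have p'm: "mono \<pi>'"
    unfolding mono_def
  proof (intro allI impI)
    fix x y :: nat assume "x \<le> y"
    then have "\<lceil>\<pi> x\<rceil> \<le> \<lceil>\<pi> y\<rceil>" by (intro ceiling_mono monoD[OF pm])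
    then have "nat \<lceil>\<pi> x\<rceil> \<le> nat \<lceil>\<pi> y\<rceil>" by (rule nat_mono)
    then show "\<pi>' x \<le> \<pi>' y" unfolding \<pi>'_def by (rule of_nat_mono)
  qed
  have int': "integer_sequence \<pi>'"
    unfolding integer_sequence_def semi_fractional_def using p'0 p'm
    by (auto simp: \<pi>'_def)
  have DDle: "DD p1 \<pi> j \<le> DD p1 \<pi>' j" for j
    unfolding DD_def using assms(1,2) p'ge[of j] by (simp add: powr_mono')
  have FFle: "FF p1 p2 \<pi> N \<le> FF p1 p2 \<pi>' N" for N
    using FF_mono[OF p0 p'0 assms(2,4,3) DDle] .
  have FF1: "FF p1 p2 \<pi> N \<le> 1" "FF p1 p2 \<pi>' N \<le> 1" for N
    using FF_le1[where \<pi>=\<pi>, OF p0 assms(1,2,4,3)] FF_le1[where \<pi>=\<pi>', OF p'0 assms(1,2,4,3)] by auto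
  define u where "u k = finish_prob p1 p2 \<pi> (Suc k)" for k
  define u' where "u' k = finish_prob p1 p2 \<pi>' (Suc k)" for k
  define a where "a k = \<pi> k + c * real k" for k
  define a' where "a' k = \<pi>' k + c * real k" for k
  have unn: "0 \<le> u k" "0 \<le> u' k" for k
    unfolding u_def u'_def using fp_nonneg[OF pm assms(1-4)] fp_nonneg[OF p'm assms(1-4)] by auto
  have FFu: "FF p1 p2 \<pi> N = (\<Sum>k<N. u k)" "FF p1 p2 \<pi>' N = (\<Sum>k<N. u' k)" for N
    by (auto simp: FF_def u_def u'_def)
  have su: "summable u" using unn FF1 FFu by (intro summableI_nonneg_bounded[where x=1]) auto
  have su': "summable u'" using unn FF1 FFu by (intro summableI_nonneg_bounded[where x=1]) auto
  have uu': "suminf u \<le> suminf u'"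
  proof (rule suminf_le_const[OF su])
    fix N show "sum u {..<N} \<le> suminf u'"
      using FFle[of N] FFu sum_le_suminf[OF su', of "{..<N}"] unn by auto
  qed
  have ann: "0 \<le> a k" for k using pnn[of k] assms(5) by (simp add: a_def)
  have am: "mono a" unfolding a_def mono_def using assms(5)
    by (auto intro!: add_mono monoD[OF pm])
  have Eq: "expected_time p1 p2 c \<pi> = (\<Sum>k. ennreal (u k * a (Suc k))) + top * (1 - (\<Sum>k. ennreal (u k)))"
    by (simp add: expected_time_def u_def a_def)
  have Eq': "expected_time p1 p2 c \<pi>' = (\<Sum>k. ennreal (u' k * a' (Suc k))) + top * (1 - (\<Sum>k. ennreal (u' k)))"
    by (simp add: expected_time_def u'_def a'_def)
  show ?thesis
  proof (intro exI conjI, rule int')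
    show "expected_time p1 p2 c \<pi>' \<le> expected_time p1 p2 c \<pi> + 1"
    proof (cases "(\<Sum>k. ennreal (u k)) < 1")
      case True
      then have "1 - (\<Sum>k. ennreal (u k)) \<noteq> 0" by (metis not_gr_zero diff_gr0_ennreal)
      then have "expected_time p1 p2 c \<pi> = top" unfolding Eq by simp
      then show ?thesis by simp
    next
      case False
      then have "1 \<le> ennreal (suminf u)" using suminf_ennreal2[OF unn(1) su] by simp
      then have s1: "1 \<le> suminf u" by (simp add: ennreal_le_iff2)
      then have "1 \<le> (\<Sum>k. ennreal (u' k))" using uu' suminf_ennreal2[OF unn(2) su'] by simp
      then have z': "1 - (\<Sum>k. ennreal (u' k)) = 0" by (simp add: diff_eq_0_ennreal)
      have z: "1 - (\<Sum>k. ennreal (u k)) = 0" using False by (simp add: diff_eq_0_ennreal)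
      show ?thesis
      proof (cases "(\<Sum>k. ennreal (u k * a (Suc k))) = top")
        case True
        then show ?thesis unfolding Eq by simp
      next
        case False
        have sb: "summable (\<lambda>k. u k * a (Suc k))"
          using summable_suminf_not_top[OF _ False] unn ann by auto
        define s where "s = (\<Sum>k. u k * a (Suc k))"
        have e1: "(\<Sum>k. ennreal (u k * a (Suc k))) = ennreal s"
          unfolding s_def by (rule suminf_ennreal2[OF _ sb]) (use unn ann in auto)
        have s0: "0 \<le> s" unfolding s_def by (rule suminf_nonneg[OF sb]) (use unn ann in auto)
        have Es: "expected_time p1 p2 c \<pi> + 1 = ennreal (s + 1)"
          unfolding Eq z e1 using s0 by (simp add: ennreal_plus)
        have key: "(\<Sum>k<N. u' k * a' (Suc k)) \<le> s + 1" for N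
        proof -
          have "(\<Sum>k<N. u' k * a' (Suc k)) \<le> (\<Sum>k<N. u' k * (a (Suc k) + 1))"
            using unn p'le by (intro sum_mono mult_left_mono) (auto simp: a_def a'_def)
          also have "\<dots> = (\<Sum>k<N. u' k * a (Suc k)) + (\<Sum>k<N. u' k)"
            by (simp add: distrib_left sum.distrib)
          finally have h1: "(\<Sum>k<N. u' k * a' (Suc k)) \<le> (\<Sum>k<N. u' k * a (Suc k)) + (\<Sum>k<N. u' k)" .
          have h2: "(\<Sum>k<N. u' k) \<le> 1" using FF1 FFu by metis
          have h3: "(\<Sum>k<N. u' k * a (Suc k)) \<le> (\<Sum>k<N. u k * a (Suc k)) + a N * ((\<Sum>k<N. u' k) - (\<Sum>k<N. u k))"
            using abel_step[OF am, of u u'] FFle FFu by metis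
          have h4: "a N * ((\<Sum>k<N. u' k) - (\<Sum>k<N. u k)) \<le> a N * (suminf u - (\<Sum>k<N. u k))"
            using h2 s1 ann[of N] by (intro mult_left_mono) auto
          have h5: "suminf u - (\<Sum>k<N. u k) = (\<Sum>k. u (k + N))"
            using suminf_split_initial_segment[OF su, of N] by simp
          have sN: "summable (\<lambda>k. u (k + N))" using summable_ignore_initial_segment[OF su] .
          have h6: "a N * (\<Sum>k. u (k + N)) = (\<Sum>k. a N * u (k + N))"
            using suminf_mult[OF sN] by simp
          have h7: "(\<Sum>k. a N * u (k + N)) \<le> (\<Sum>k. u (k + N) * a (Suc (k + N)))"
          proof (rule suminf_le)
            fix k show "a N * u (k + N) \<le> u (k + N) * a (Suc (k + N))"
            proof -
              have "a N * u (k + N) \<le> a (Suc (k + N)) * u (k + N)"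
                using unn(1)[of "k+N"] monoD[OF am, of N "Suc (k+N)"] by (intro mult_right_mono) auto
              then show ?thesis by (simp only: mult.commute)
            qed
          next
            show "summable (\<lambda>k. a N * u (k + N))" using summable_mult[OF sN] .
          next
            show "summable (\<lambda>k. u (k + N) * a (Suc (k + N)))"
              using summable_ignore_initial_segment[OF sb, of N] by simp
          qed
          have h8: "s = (\<Sum>k. u (k + N) * a (Suc (k + N))) + (\<Sum>k<N. u k * a (Suc k))"
            unfolding s_def using suminf_split_initial_segment[OF sb, of N] by simp
          have h46: "a N * ((\<Sum>k<N. u' k) - (\<Sum>k<N. u k)) \<le> (\<Sum>k. a N * u (k + N))"
            using h4 unfolding h5 h6 .
          show ?thesis using h1 h2 h3 h46 h7 h8 by linarith
        qed
        have "(\<Sum>k. ennreal (u' k * a' (Suc k))) \<le> ennreal (s + 1)"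
          unfolding suminf_eq_SUP
        proof (rule SUP_least)
          fix N
          have "(\<Sum>k<N. ennreal (u' k * a' (Suc k))) = ennreal (\<Sum>k<N. u' k * a' (Suc k))"
            using unn(2) ann p'le assms(5) by (intro sum_ennreal) (auto simp: a'_def intro!: mult_nonneg_nonneg add_nonneg_nonneg order.trans[OF pnn p'ge])
          then show "(\<Sum>k<N. ennreal (u' k * a' (Suc k))) \<le> ennreal (s + 1)"
            using key by (simp add: ennreal_leI)
        qed
        then show ?thesis unfolding Eq' z' Es by simp
      qed
    qed
  qed
qed

end
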